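(* Let $\mathbf i=(I,\varepsilon,d)$ be a feed, $k\in I$, and $\mathbf i'=(I,\varepsilon',d)$ its mutation in direction $k$. Let $\mathcal D_{\mathbf i}$, $\mathcal D_{\mathbf i'}$ be split tori over $\mathbb Q$ with coordinates $(B_i,X_i)$, $(B'_i,X'_i)$, and define $$W_{\mathbf i}:=-\tfrac12\sum_{i,j\in I}\widetilde\varepsilon_{ij}\cdot B_i\wedge B_j-\sum_{i\in I}d_i\cdot B_i\wedge X_i\in\Lambda^2\mathbb Q(\mathcal D_{\mathbf i})^*,\qquad \widetilde\varepsilon_{ij}:=d_i\varepsilon_{ij},$$ and $W_{\mathbf i'}$ in the same way from $(B'_i,X'_i)$, $\varepsilon'$, $d$ (here $\frac12\sum_{i,j}\widetilde\varepsilon_{ij}B_i\wedge B_j$ means $\sum_{i<j}\widetilde\varepsilon_{ij}B_i\wedge B_j$ for any total order on $I$). Let $\mu_k:\mathcal D_{\mathbf i}\dashrightarrow\mathcal D_{\mathbf i'}$ be the birational map $$\mu_k^*X'_k=X_k^{-1},\ \ \mu_k^*X'_i=X_i(1+X_k^{-\mathrm{sgn}(\varepsilon_{ik})})^{-\varepsilon_{ik}}\ (i\ne k),\ \ \mu_k^*B'_i=B_i\ (i\neq k),\ \ \mu_k^*B'_k=\frac{\mathbb B_k^-+X_k\mathbb B_k^+}{B_k(1+X_k)} .$$ Then, in $\Lambda^2\mathbb Q(\mathcal D_{\mathbf i})^*$, $$\mu_k^*W_{\mathbf i'}-W_{\mathbf i}=d_k\cdot\bigl((1+\widetilde X_k)\wedge\widetilde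 X_k-(1+X_k)\wedge X_k\bigr),\qquad \widetilde X_k:=X_k\prod_{j\in I}B_j^{\varepsilon_{kj}} .$$
   Context: A feed $\mathbf i=(I,\varepsilon,d)$: $I$ finite, $\varepsilon$ an integer $I\times I$ matrix, $d_i$ positive integers with $\varepsilon_{ij}d_j^{-1}$ skew-symmetric. Mutation in direction $k$: $\varepsilon'_{ij}=-\varepsilon_{ij}$ if $i=k$ or $j=k$; $\varepsilon'_{ij}=\varepsilon_{ij}$ if $\varepsilon_{ik}\varepsilon_{kj}\le0$; $\varepsilon'_{ij}=\varepsilon_{ij}+|\varepsilon_{ik}|\varepsilon_{kj}$ if $\varepsilon_{ik}\varepsilon_{kj}>0$. $\mathbb Q(\mathcal D_{\mathbf i})^*$ is the multiplicative group of the field of rational functions on $\mathcal D_{\mathbf i}$, $\Lambda^2$ its exterior square as an abelian group, and $n\cdot$ denotes the integer multiple in this group. $\mathbb B_k^+:=\prod_{j:\varepsilon_{kj}>0}B_j^{\varepsilon_{kj}}$, $\mathbb B_k^-:=\prod_{j:\varepsilon_{kj}<0}B_j^{-\varepsilon_{kj}}$; $\mathrm{sgn}$ is the sign function. *)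

theory Defs
  imports Complex_Main "HOL-Library.Poly_Mapping" "HOL-Library.Product_Lexorder"
          "HOL-Computational_Algebra.Fraction_Field"
begin

definition is_feed :: "('i::finite \<Rightarrow> 'i \<Rightarrow> int) \<Rightarrow> ('i \<Rightarrow> int) \<Rightarrow> bool" where
  "is_feed \<epsilon> d \<longleftrightarrow> (\<forall>i. d i > 0) \<and>
     (\<forall>i j. of_int (\<epsilon> i j) / of_int (d j) = - (of_int (\<epsilon> j i) / of_int (d i) :: rat))"

definition mutate :: "('i \<Rightarrow> 'i \<Rightarrow> int) \<Rightarrow> 'i \<Rightarrow> ('i \<Rightarrow> 'i \<Rightarrow> int)" where
  "mutate \<epsilon> k = (\<lambda>i j.
     if i = k \<or> j = k then - \<epsilon> i j
     else if \<epsilon> i k * \<epsilon> k j \<le> 0 then \<epsilon> i j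
     else \<epsilon> i j + \<bar>\<epsilon> i k\<bar> * \<epsilon> k j)"

text \<open>Formal integer combinations of symbols a \<and> b are finitely supported functions
  on pairs; the exterior square of K^* is their quotient by the subgroup generated by
  bimultiplicativity and alternation relations (for nonzero a, b, c).\<close>

type_synonym 'k wsum = "('k \<times> 'k) \<Rightarrow>\<^sub>0 int"

definition wedge :: "'k \<Rightarrow> 'k \<Rightarrow> 'k wsum" where
  "wedge a b = Poly_Mapping.single (a, b) 1"

definition zmult :: "int \<Rightarrow> 'k wsum \<Rightarrow> 'k wsum" where
  "zmult n x = Poly_Mapping.map (\<lambda>c. n * c) x"

inductive_set wedge_relations :: "'k::field wsum set" where
  zero: "0 \<in> wedge_relations"
| lin1: "a \<noteq> 0 \<Longrightarrow> b \<noteq> 0 \<Longrightarrow> c \<noteq> 0 \<Longrightarrow>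
         wedge (a * b) c - wedge a c - wedge b c \<in> wedge_relations"
| lin2: "a \<noteq> 0 \<Longrightarrow> b \<noteq> 0 \<Longrightarrow> c \<noteq> 0 \<Longrightarrow>
         wedge a (b * c) - wedge a b - wedge a c \<in> wedge_relations"
| alt: "a \<noteq> 0 \<Longrightarrow> wedge a a \<in> wedge_relations"
| add: "x \<in> wedge_relations \<Longrightarrow> y \<in> wedge_relations \<Longrightarrow> x + y \<in> wedge_relations"
| neg: "x \<in> wedge_relations \<Longrightarrow> - x \<in> wedge_relations"

definition wedge_eq :: "'k::field wsum \<Rightarrow> 'k wsum \<Rightarrow> bool" where
  "wedge_eq x y \<longleftrightarrow> x - y \<in> wedge_relations"

text \<open>Variable (i, False) is B_i and (i, True) is X_i; rational functions are
  fractions of polynomials with rational coefficients.\<close>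

type_synonym 'i ratfun = "((('i \<times> bool) \<Rightarrow>\<^sub>0 nat) \<Rightarrow>\<^sub>0 rat) fract"

definition var :: "'i \<times> bool \<Rightarrow> 'i::linorder ratfun" where
  "var v = Fract (Poly_Mapping.single (Poly_Mapping.single v 1) 1) 1"

definition Bvar :: "'i \<Rightarrow> 'i::linorder ratfun" where "Bvar i = var (i, False)"
definition Xvar :: "'i \<Rightarrow> 'i::linorder ratfun" where "Xvar i = var (i, True)"

definition W :: "('i::{finite,linorder} \<Rightarrow> 'i \<Rightarrow> int) \<Rightarrow> ('i \<Rightarrow> int)
                 \<Rightarrow> ('i \<Rightarrow> 'k) \<Rightarrow> ('i \<Rightarrow> 'k) \<Rightarrow> 'k wsum" where
  "W \<epsilon> d B X =
     - (\<Sum>(i,j)\<in>{(i,j). i < j}. zmult (d i * \<epsilon> i j) (wedge (B i) (B j)))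
     - (\<Sum>i\<in>UNIV. zmult (d i) (wedge (B i) (X i)))"

definition Bplus :: "('i::finite \<Rightarrow> 'i \<Rightarrow> int) \<Rightarrow> ('i \<Rightarrow> 'k::field) \<Rightarrow> 'i \<Rightarrow> 'k" where
  "Bplus \<epsilon> B k = (\<Prod>j\<in>{j. \<epsilon> k j > 0}. B j ^ nat (\<epsilon> k j))"

definition Bminus :: "('i::finite \<Rightarrow> 'i \<Rightarrow> int) \<Rightarrow> ('i \<Rightarrow> 'k::field) \<Rightarrow> 'i \<Rightarrow> 'k" where
  "Bminus \<epsilon> B k = (\<Prod>j\<in>{j. \<epsilon> k j < 0}. B j ^ nat (- \<epsilon> k j))"

definition mu_B :: "('i::finite \<Rightarrow> 'i \<Rightarrow> int) \<Rightarrow> 'i \<Rightarrow> ('i \<Rightarrow> 'k::field) \<Rightarrow> ('i \<Rightarrow> 'k) \<Rightarrow> 'i \<Rightarrow> 'k" where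
  "mu_B \<epsilon> k B X i =
     (if i = k then (Bminus \<epsilon> B k + X k * Bplus \<epsilon> B k) / (B k * (1 + X k)) else B i)"

definition mu_X :: "('i::finite \<Rightarrow> 'i \<Rightarrow> int) \<Rightarrow> 'i \<Rightarrow> ('i \<Rightarrow> 'k::field) \<Rightarrow> 'i \<Rightarrow> 'k" where
  "mu_X \<epsilon> k X i =
     (if i = k then inverse (X k)
      else X i * (1 + X k powi (- sgn (\<epsilon> i k))) powi (- \<epsilon> i k))"

definition Xtilde :: "('i::finite \<Rightarrow> 'i \<Rightarrow> int) \<Rightarrow> ('i \<Rightarrow> 'k::field) \<Rightarrow> ('i \<Rightarrow> 'k) \<Rightarrow> 'i \<Rightarrow> 'k" where
  "Xtilde \<epsilon> B X k = X k * (\<Prod>j\<in>UNIV. B j powi \<epsilon> k j)"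

end

theory Submission
  imports Defs
begin

abbreviation "RR \<equiv> wedge_relations"

lemma lookup_zmult: "Poly_Mapping.lookup (zmult n x) p = n * Poly_Mapping.lookup x p"
  unfolding zmult_def by transfer (simp add: when_def)

lemma zmult_add: "zmult n (x + y) = zmult n x + zmult n y"
  by (rule poly_mapping_eqI) (simp add: lookup_zmult lookup_add algebra_simps)
lemma zmult_diff: "zmult n (x - y) = zmult n x - zmult n y"
  by (rule poly_mapping_eqI) (simp add: lookup_zmult lookup_minus algebra_simps)
lemma zmult_neg: "zmult n (- x) = - zmult n x"
  by (rule poly_mapping_eqI) (simp add: lookup_zmult)
lemma zmult_addl: "zmult (m + n) x = zmult m x + zmult n x"
  by (rule poly_mapping_eqI) (simp add: lookup_zmult lookup_add algebra_simps)
lemma zmult_diffl: "zmult (m - n) x = zmult m x - zmult n x"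
  by (rule poly_mapping_eqI) (simp add: lookup_zmult lookup_minus algebra_simps)
lemma zmult_negl: "zmult (- m) x = - zmult m x"
  by (rule poly_mapping_eqI) (simp add: lookup_zmult)
lemma zmult_zmult: "zmult m (zmult n x) = zmult (m * n) x"
  by (rule poly_mapping_eqI) (simp add: lookup_zmult)
lemma zmult_1[simp]: "zmult 1 x = x"
  by (rule poly_mapping_eqI) (simp add: lookup_zmult)
lemma zmult_0[simp]: "zmult 0 x = 0"
  by (rule poly_mapping_eqI) (simp add: lookup_zmult)
lemma zmult_0r[simp]: "zmult n 0 = 0"
  by (rule poly_mapping_eqI) (simp add: lookup_zmult)
lemma zmult_sum: "zmult n (sum f A) = (\<Sum>a\<in>A. zmult n (f a))"
  by (rule poly_mapping_eqI) (simp add: lookup_zmult lookup_sum sum_distrib_left)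
lemma zmult_suml: "zmult (sum f A) x = (\<Sum>a\<in>A. zmult (f a) x)"
  by (rule poly_mapping_eqI) (simp add: lookup_zmult lookup_sum sum_distrib_right)

lemma R_diff: "x \<in> RR \<Longrightarrow> y \<in> RR \<Longrightarrow> x - y \<in> RR"
  using wedge_relations.add[of x "-y"] wedge_relations.neg[of y] by simp

lemma R_zmult_nat: "x \<in> RR \<Longrightarrow> zmult (int m) x \<in> RR"
proof (induction m)
  case 0 then show ?case by (simp add: wedge_relations.zero)
next
  case (Suc m)
  have "zmult (int (Suc m)) x = zmult (int m) x + x" by (simp add: zmult_addl)
  then show ?case using Suc wedge_relations.add by simp
qed

lemma R_zmult: "x \<in> RR \<Longrightarrow> zmult n x \<in> RR"
proof (cases "n \<ge> 0")
  case True then show "x \<in> RR \<Longrightarrow> ?thesis" using R_zmult_nat[of x "nat n"] by simp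
next
  case False
  then have "n = - int (nat (-n))" by simp
  then show "x \<in> RR \<Longrightarrow> ?thesis" using R_zmult_nat[of x "nat (-n)"] wedge_relations.neg
    by (metis zmult_negl)
qed

lemma R_sum: "(\<And>a. a \<in> A \<Longrightarrow> f a \<in> RR) \<Longrightarrow> sum f A \<in> RR"
proof (induction A rule: infinite_finite_induct)
  case (infinite A) then show ?case by (simp add: wedge_relations.zero)
next
  case empty then show ?case by (simp add: wedge_relations.zero)
next
  case (insert x F) then show ?case by (simp add: wedge_relations.add)
qed

lemma weq_refl: "wedge_eq x x" by (simp add: wedge_eq_def wedge_relations.zero)
lemma weq_sym: "wedge_eq x y \<Longrightarrow> wedge_eq y x"
  unfolding wedge_eq_def using wedge_relations.neg[of "x - y"] by simp
lemma weq_trans[trans]: "wedge_eq x y \<Longrightarrow> wedge_eq y z \<Longrightarrow> wedge_eq x z"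
  unfolding wedge_eq_def using wedge_relations.add[of "x - y" "y - z"] by simp
lemma weq_add: "wedge_eq x y \<Longrightarrow> wedge_eq x' y' \<Longrightarrow> wedge_eq (x + x') (y + y')"
  unfolding wedge_eq_def using wedge_relations.add[of "x - y" "x' - y'"] by (simp add: algebra_simps)
lemma weq_diff: "wedge_eq x y \<Longrightarrow> wedge_eq x' y' \<Longrightarrow> wedge_eq (x - x') (y - y')"
  unfolding wedge_eq_def using R_diff[of "x - y" "x' - y'"] by (simp add: algebra_simps)
lemma weq_neg: "wedge_eq x y \<Longrightarrow> wedge_eq (- x) (- y)"
  unfolding wedge_eq_def using wedge_relations.neg[of "x - y"] by (simp add: algebra_simps)
lemma weq_zmult: "wedge_eq x y \<Longrightarrow> wedge_eq (zmult n x) (zmult n y)"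
  unfolding wedge_eq_def using R_zmult[of "x - y" n] by (simp add: zmult_diff)
lemma weq_sum: "(\<And>a. a \<in> A \<Longrightarrow> wedge_eq (f a) (g a)) \<Longrightarrow> wedge_eq (sum f A) (sum g A)"
  unfolding wedge_eq_def using R_sum[of A "\<lambda>a. f a - g a"] by (simp add: sum_subtractf)

lemma wl_mult: "a \<noteq> 0 \<Longrightarrow> b \<noteq> 0 \<Longrightarrow> c \<noteq> 0 \<Longrightarrow>
   wedge_eq (wedge (a * b) c) (wedge a c + wedge b c :: 'k::field wsum)"
  unfolding wedge_eq_def using wedge_relations.lin1[of a b c] by (simp add: algebra_simps)
lemma wr_mult: "a \<noteq> 0 \<Longrightarrow> b \<noteq> 0 \<Longrightarrow> c \<noteq> 0 \<Longrightarrow>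
   wedge_eq (wedge a (b * c)) (wedge a b + wedge a c :: 'k::field wsum)"
  unfolding wedge_eq_def using wedge_relations.lin2[of a b c] by (simp add: algebra_simps)

lemma wl_one: "c \<noteq> 0 \<Longrightarrow> wedge_eq (wedge 1 c) (0 :: 'k::field wsum)"
  unfolding wedge_eq_def using wedge_relations.neg[OF wedge_relations.lin1[of 1 1 c]] by simp
lemma wr_one: "c \<noteq> 0 \<Longrightarrow> wedge_eq (wedge c 1) (0 :: 'k::field wsum)"
  unfolding wedge_eq_def using wedge_relations.neg[OF wedge_relations.lin2[of c 1 1]] by simp

lemma wl_pow: "a \<noteq> 0 \<Longrightarrow> c \<noteq> 0 \<Longrightarrow>
   wedge_eq (wedge (a ^ n) c) (zmult (int n) (wedge a c) :: 'k::field wsum)"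
proof (induction n)
  case 0 then show ?case by (simp add: wl_one)
next
  case (Suc n)
  have "wedge_eq (wedge (a ^ Suc n) c) (wedge a c + wedge (a ^ n) c)"
    using wl_mult[of a "a^n" c] Suc by simp
  also have "wedge_eq \<dots> (wedge a c + zmult (int n) (wedge a c))"
    by (rule weq_add[OF weq_refl Suc.IH[OF Suc.prems]])
  finally show ?case by (simp add: zmult_addl algebra_simps)
qed

lemma wr_pow: "a \<noteq> 0 \<Longrightarrow> c \<noteq> 0 \<Longrightarrow>
   wedge_eq (wedge c (a ^ n)) (zmult (int n) (wedge c a) :: 'k::field wsum)"
proof (induction n)
  case 0 then show ?case by (simp add: wr_one)
next
  case (Suc n)
  have "wedge_eq (wedge c (a ^ Suc n)) (wedge c a + wedge c (a ^ n))"
    using wr_mult[of c a "a^n"] Suc by simp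
  also have "wedge_eq \<dots> (wedge c a + zmult (int n) (wedge c a))"
    by (rule weq_add[OF weq_refl Suc.IH[OF Suc.prems]])
  finally show ?case by (simp add: zmult_addl algebra_simps)
qed

lemma wl_inv: "a \<noteq> 0 \<Longrightarrow> c \<noteq> 0 \<Longrightarrow>
   wedge_eq (wedge (inverse a) c) (- wedge a c :: 'k::field wsum)"
proof -
  assume a: "a \<noteq> 0" and c: "c \<noteq> 0"
  have "wedge_eq (wedge (a * inverse a) c) (wedge a c + wedge (inverse a) c)"
    using wl_mult[of a "inverse a" c] a c by simp
  moreover have "wedge_eq (wedge (a * inverse a) c) 0" using a c wl_one by simp
  ultimately have "wedge_eq (wedge a c + wedge (inverse a) c) 0"
    using weq_sym weq_trans by blast
  then show ?thesis unfolding wedge_eq_def by (simp add: algebra_simps)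
qed

lemma wr_inv: "a \<noteq> 0 \<Longrightarrow> c \<noteq> 0 \<Longrightarrow>
   wedge_eq (wedge c (inverse a)) (- wedge c a :: 'k::field wsum)"
proof -
  assume a: "a \<noteq> 0" and c: "c \<noteq> 0"
  have "wedge_eq (wedge c (a * inverse a)) (wedge c a + wedge c (inverse a))"
    using wr_mult[of c a "inverse a"] a c by simp
  moreover have "wedge_eq (wedge c (a * inverse a)) 0" using a c wr_one by simp
  ultimately have "wedge_eq (wedge c a + wedge c (inverse a)) 0"
    using weq_sym weq_trans by blast
  then show ?thesis unfolding wedge_eq_def by (simp add: algebra_simps)
qed

lemma wl_powi: "a \<noteq> 0 \<Longrightarrow> c \<noteq> 0 \<Longrightarrow>
   wedge_eq (wedge (a powi n) c) (zmult n (wedge a c) :: 'k::field wsum)"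
proof (cases "n \<ge> 0")
  case True
  assume a: "a \<noteq> 0" and c: "c \<noteq> 0"
  then show ?thesis using True wl_pow[OF a c, of "nat n"] by (simp add: power_int_def)
next
  case False
  assume a: "a \<noteq> 0" and c: "c \<noteq> 0"
  have "a powi n = inverse (a ^ nat (-n))" using False by (simp add: power_int_def power_inverse)
  then have "wedge_eq (wedge (a powi n) c) (- wedge (a ^ nat (-n)) c)"
    using wl_inv[of "a ^ nat (-n)" c] a c by simp
  also have "wedge_eq \<dots> (- zmult (int (nat (-n))) (wedge a c))"
    by (rule weq_neg[OF wl_pow[OF a c]])
  finally show ?thesis using False by (simp add: zmult_negl[symmetric])
qed

lemma wr_powi: "a \<noteq> 0 \<Longrightarrow> c \<noteq> 0 \<Longrightarrow>
   wedge_eq (wedge c (a powi n)) (zmult n (wedge c a) :: 'k::field wsum)"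
proof (cases "n \<ge> 0")
  case True
  assume a: "a \<noteq> 0" and c: "c \<noteq> 0"
  then show ?thesis using True wr_pow[OF a c, of "nat n"] by (simp add: power_int_def)
next
  case False
  assume a: "a \<noteq> 0" and c: "c \<noteq> 0"
  have "a powi n = inverse (a ^ nat (-n))" using False by (simp add: power_int_def power_inverse)
  then have "wedge_eq (wedge c (a powi n)) (- wedge c (a ^ nat (-n)))"
    using wr_inv[of "a ^ nat (-n)" c] a c by simp
  also have "wedge_eq \<dots> (- zmult (int (nat (-n))) (wedge c a))"
    by (rule weq_neg[OF wr_pow[OF a c]])
  finally show ?thesis using False by (simp add: zmult_negl[symmetric])
qed

lemma wl_prod: "finite A \<Longrightarrow> (\<And>g. g \<in> A \<Longrightarrow> f g \<noteq> 0) \<Longrightarrow> c \<noteq> 0 \<Longrightarrow>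
   wedge_eq (wedge (prod f A) c) (\<Sum>g\<in>A. wedge (f g) c :: 'k::field wsum)"
proof (induction A rule: finite_induct)
  case empty then show ?case by (simp add: wl_one)
next
  case (insert x F)
  have nz: "prod f F \<noteq> 0" using insert by simp
  have "wedge_eq (wedge (prod f (insert x F)) c) (wedge (f x) c + wedge (prod f F) c)"
    using insert wl_mult[of "f x" "prod f F" c] nz by simp
  also have "wedge_eq \<dots> (wedge (f x) c + (\<Sum>g\<in>F. wedge (f g) c))"
    using insert by (intro weq_add weq_refl) auto
  finally show ?case using insert by simp
qed

lemma wr_prod: "finite A \<Longrightarrow> (\<And>g. g \<in> A \<Longrightarrow> f g \<noteq> 0) \<Longrightarrow> c \<noteq> 0 \<Longrightarrow>
   wedge_eq (wedge c (prod f A)) (\<Sum>g\<in>A. wedge c (f g) :: 'k::field wsum)"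
proof (induction A rule: finite_induct)
  case empty then show ?case by (simp add: wr_one)
next
  case (insert x F)
  have nz: "prod f F \<noteq> 0" using insert by simp
  have "wedge_eq (wedge c (prod f (insert x F))) (wedge c (f x) + wedge c (prod f F))"
    using insert wr_mult[of c "f x" "prod f F"] nz by simp
  also have "wedge_eq \<dots> (wedge c (f x) + (\<Sum>g\<in>F. wedge c (f g)))"
    using insert by (intro weq_add weq_refl) auto
  finally show ?case using insert by simp
qed

lemma w_anti: "a \<noteq> 0 \<Longrightarrow> b \<noteq> 0 \<Longrightarrow> wedge a b + wedge b a \<in> (RR :: 'k::field wsum set)"
proof -
  assume a: "a \<noteq> 0" and b: "b \<noteq> 0"
  have "wedge_eq (wedge (a*b) (a*b)) (wedge a (a*b) + wedge b (a*b))"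
    using wl_mult[of a b "a*b"] a b by simp
  also have "wedge_eq \<dots> ((wedge a a + wedge a b) + (wedge b a + wedge b b))"
    using a b by (intro weq_add wr_mult) auto
  finally have 1: "wedge_eq (wedge (a*b) (a*b)) ((wedge a a + wedge a b) + (wedge b a + wedge b b))" .
  have 2: "wedge_eq (wedge (a*b) (a*b)) 0" "wedge_eq (wedge a a) 0" "wedge_eq (wedge b b) 0"
    using a b wedge_relations.alt[of "a*b"] wedge_relations.alt[of a] wedge_relations.alt[of b]
    unfolding wedge_eq_def by auto
  have "wedge_eq ((wedge a a + wedge a b) + (wedge b a + wedge b b)) 0"
    using 1 2(1) weq_sym weq_trans by blast
  then have "wedge_eq ((wedge a a + wedge b b) + (wedge a b + wedge b a)) 0"
    by (simp add: algebra_simps)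
  moreover have "wedge_eq ((wedge a a + wedge b b) + (wedge a b + wedge b a)) (0 + (wedge a b + wedge b a))"
    using 2 by (intro weq_add weq_refl) (simp add: weq_add[of _ 0 _ 0, simplified])
  ultimately have "wedge_eq (0 + (wedge a b + wedge b a)) 0" using weq_sym weq_trans by blast
  then show ?thesis by (simp add: wedge_eq_def)
qed

definition push :: "('g \<Rightarrow> 'k) \<Rightarrow> ('g \<Rightarrow> 'g \<Rightarrow> int) \<Rightarrow> 'k wsum" where
  "push v f = (\<Sum>g\<in>UNIV. \<Sum>h\<in>UNIV. zmult (f g h) (wedge (v g) (v h)))"

definition mon :: "('g \<Rightarrow> 'k::field) \<Rightarrow> ('g \<Rightarrow> int) \<Rightarrow> 'k" where
  "mon v u = (\<Prod>g\<in>UNIV. v g powi u g)"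

lemma mon_nz: "(\<And>g. v g \<noteq> 0) \<Longrightarrow> mon v (u :: 'g::finite \<Rightarrow> int) \<noteq> 0"
  unfolding mon_def by (simp add: prod_zero_iff)

lemma wl_mon: "(\<And>g. v g \<noteq> 0) \<Longrightarrow> c \<noteq> 0 \<Longrightarrow>
  wedge_eq (wedge (mon v (u :: 'g::finite \<Rightarrow> int)) c) (\<Sum>g\<in>UNIV. zmult (u g) (wedge (v g) c))"
proof -
  assume v: "\<And>g. v g \<noteq> 0" and c: "c \<noteq> 0"
  have "wedge_eq (wedge (mon v u) c) (\<Sum>g\<in>UNIV. wedge (v g powi u g) c)"
    unfolding mon_def using v c by (intro wl_prod) (auto simp: power_int_def)
  also have "wedge_eq \<dots> (\<Sum>g\<in>UNIV. zmult (u g) (wedge (v g) c))"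
    using v c by (intro weq_sum wl_powi) auto
  finally show ?thesis .
qed

lemma wr_mon: "(\<And>g. v g \<noteq> 0) \<Longrightarrow> c \<noteq> 0 \<Longrightarrow>
  wedge_eq (wedge c (mon v (u :: 'g::finite \<Rightarrow> int))) (\<Sum>g\<in>UNIV. zmult (u g) (wedge c (v g)))"
proof -
  assume v: "\<And>g. v g \<noteq> 0" and c: "c \<noteq> 0"
  have "wedge_eq (wedge c (mon v u)) (\<Sum>g\<in>UNIV. wedge c (v g powi u g))"
    unfolding mon_def using v c by (intro wr_prod) (auto simp: power_int_def)
  also have "wedge_eq \<dots> (\<Sum>g\<in>UNIV. zmult (u g) (wedge c (v g)))"
    using v c by (intro weq_sum wr_powi) auto
  finally show ?thesis .
qed

lemma w_mon_mon: "(\<And>g. v g \<noteq> 0) \<Longrightarrow>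
  wedge_eq (wedge (mon v (u :: 'g::finite \<Rightarrow> int)) (mon v w)) (push v (\<lambda>g h. u g * w h))"
proof -
  assume v: "\<And>g. v g \<noteq> 0"
  have "wedge_eq (wedge (mon v u) (mon v w)) (\<Sum>g\<in>UNIV. zmult (u g) (wedge (v g) (mon v w)))"
    using v by (intro wl_mon mon_nz) auto
  also have "wedge_eq \<dots> (\<Sum>g\<in>UNIV. zmult (u g) (\<Sum>h\<in>UNIV. zmult (w h) (wedge (v g) (v h))))"
    using v by (intro weq_sum weq_zmult wr_mon) auto
  finally show ?thesis unfolding push_def by (simp add: zmult_sum zmult_zmult)
qed

lemma push_add: "push v (\<lambda>g h. f g h + f' g h) = push v f + push v f'"
  unfolding push_def by (simp add: zmult_addl sum.distrib)
lemma push_diff: "push v (\<lambda>g h. f g h - f' g h) = push v f - push v f'"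
  unfolding push_def by (simp add: zmult_diffl sum_subtractf)
lemma push_neg: "push v (\<lambda>g h. - f g h) = - push v f"
  unfolding push_def by (simp add: zmult_negl sum_negf)
lemma push_scale: "push v (\<lambda>g h. c * f g h) = zmult c (push v f)"
  unfolding push_def by (simp add: zmult_zmult zmult_sum)
lemma push_sum: "push v (\<lambda>g h. \<Sum>i\<in>A. F i g h) = (\<Sum>i\<in>A. push v (F i))"
proof -
  have "\<And>g. (\<Sum>h\<in>UNIV. \<Sum>i\<in>A. zmult (F i g h) (wedge (v g) (v h))) =
     (\<Sum>i\<in>A. \<Sum>h\<in>UNIV. zmult (F i g h) (wedge (v g) (v h)))" by (rule sum.swap)
  then have "push v (\<lambda>g h. \<Sum>i\<in>A. F i g h) = (\<Sum>g\<in>UNIV. \<Sum>i\<in>A. \<Sum>h\<in>UNIV. zmult (F i g h) (wedge (v g) (v h)))"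
    unfolding push_def zmult_suml by simp
  also have "\<dots> = (\<Sum>i\<in>A. \<Sum>g\<in>UNIV. \<Sum>h\<in>UNIV. zmult (F i g h) (wedge (v g) (v h)))"
    by (rule sum.swap)
  finally show ?thesis unfolding push_def .
qed

lemma push_sym_aux: "finite A \<Longrightarrow> (\<And>g h. f g h = f h g) \<Longrightarrow> (\<And>g. v g \<noteq> 0) \<Longrightarrow>
   (\<Sum>g\<in>A. \<Sum>h\<in>A. zmult (f g h) (wedge (v g) (v h))) \<in> (RR :: 'k::field wsum set)"
proof (induction A rule: finite_induct)
  case empty then show ?case by (simp add: wedge_relations.zero)
next
  case (insert a F)
  let ?w = "\<lambda>g h. zmult (f g h) (wedge (v g) (v h))"
  have eq: "(\<Sum>g\<in>insert a F. \<Sum>h\<in>insert a F. ?w g h) =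
     (\<Sum>g\<in>F. \<Sum>h\<in>F. ?w g h) + ?w a a + (\<Sum>h\<in>F. zmult (f a h) (wedge (v a) (v h) + wedge (v h) (v a)))"
  proof -
    have "(\<Sum>g\<in>insert a F. \<Sum>h\<in>insert a F. ?w g h) =
      (?w a a + (\<Sum>h\<in>F. ?w a h)) + (\<Sum>g\<in>F. ?w g a + (\<Sum>h\<in>F. ?w g h))"
      using insert(1,2) by simp
    also have "\<dots> = (\<Sum>g\<in>F. \<Sum>h\<in>F. ?w g h) + ?w a a + ((\<Sum>h\<in>F. ?w a h) + (\<Sum>h\<in>F. ?w h a))"
      by (simp only: sum.distrib add_ac)
    also have "(\<Sum>h\<in>F. ?w a h) + (\<Sum>h\<in>F. ?w h a) = (\<Sum>h\<in>F. zmult (f a h) (wedge (v a) (v h) + wedge (v h) (v a)))"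
      by (simp only: sum.distrib[symmetric] zmult_add insert.prems(1)[of _ a])
    finally show ?thesis .
  qed
  have A: "?w a a \<in> RR" using insert wedge_relations.alt R_zmult by blast
  have B: "(\<Sum>h\<in>F. zmult (f a h) (wedge (v a) (v h) + wedge (v h) (v a))) \<in> RR"
    using insert by (intro R_sum R_zmult w_anti) auto
  have C: "(\<Sum>g\<in>F. \<Sum>h\<in>F. ?w g h) \<in> RR" using insert.IH[OF insert.prems] .
  show ?case unfolding eq by (rule wedge_relations.add[OF wedge_relations.add[OF C A] B])
qed

lemma push_sym: "(\<And>g h. f g h = f h g) \<Longrightarrow> (\<And>g. v g \<noteq> 0) \<Longrightarrow>
   push v (f :: 'g::finite \<Rightarrow> _) \<in> (RR :: 'k::field wsum set)"
  unfolding push_def by (rule push_sym_aux) auto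

datatype 'i gen = Bg 'i | Xg 'i | Pg | Qg

lemma UNIV_gen: "(UNIV :: 'i gen set) = Bg ` UNIV \<union> Xg ` UNIV \<union> {Pg, Qg}"
proof -
  have "x \<in> Bg ` UNIV \<union> Xg ` UNIV \<union> {Pg, Qg}" for x :: "'i gen" by (cases x) auto
  then show ?thesis by blast
qed

instance gen :: (finite) finite
  by standard (simp add: UNIV_gen)

lemma sum_gen: "(\<Sum>g\<in>(UNIV :: 'i::finite gen set). f g) =
   (\<Sum>i\<in>UNIV. f (Bg i)) + (\<Sum>i\<in>UNIV. f (Xg i)) + f Pg + f Qg"
proof -
  have d1: "Bg ` UNIV \<inter> Xg ` UNIV = ({} :: 'i gen set)" by auto
  have "(\<Sum>g\<in>(UNIV :: 'i gen set). f g) = (\<Sum>g\<in>Bg ` UNIV \<union> Xg ` UNIV. f g) + (\<Sum>g\<in>{Pg,Qg}. f g)"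
    unfolding UNIV_gen by (rule sum.union_disjoint) auto
  also have "(\<Sum>g\<in>Bg ` UNIV \<union> Xg ` UNIV. f g) = (\<Sum>g\<in>Bg ` UNIV. f g) + (\<Sum>g\<in>Xg ` UNIV. f g)"
    by (rule sum.union_disjoint) auto
  also have "(\<Sum>g\<in>Bg ` UNIV. f g) = (\<Sum>i\<in>UNIV. f (Bg i))"
    by (rule sum.reindex_cong[of Bg]) (auto simp: inj_def)
  also have "(\<Sum>g\<in>Xg ` UNIV. f g) = (\<Sum>i\<in>UNIV. f (Xg i))"
    by (rule sum.reindex_cong[of Xg]) (auto simp: inj_def)
  finally show ?thesis by (simp add: add.assoc)
qed

lemma prod_gen: "(\<Prod>g\<in>(UNIV :: 'i::finite gen set). f g) =
   (\<Prod>i\<in>UNIV. f (Bg i)) * (\<Prod>i\<in>UNIV. f (Xg i)) * f Pg * f Qg"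
proof -
  have "(\<Prod>g\<in>(UNIV :: 'i gen set). f g) = (\<Prod>g\<in>Bg ` UNIV \<union> Xg ` UNIV. f g) * (\<Prod>g\<in>{Pg,Qg}. f g)"
    unfolding UNIV_gen by (rule prod.union_disjoint) auto
  also have "(\<Prod>g\<in>Bg ` UNIV \<union> Xg ` UNIV. f g) = (\<Prod>g\<in>Bg ` UNIV. f g) * (\<Prod>g\<in>Xg ` UNIV. f g)"
    by (rule prod.union_disjoint) auto
  also have "(\<Prod>g\<in>Bg ` UNIV. f g) = (\<Prod>i\<in>UNIV. f (Bg i))"
    by (rule prod.reindex_cong[of Bg]) (auto simp: inj_def)
  also have "(\<Prod>g\<in>Xg ` UNIV. f g) = (\<Prod>i\<in>UNIV. f (Xg i))"
    by (rule prod.reindex_cong[of Xg]) (auto simp: inj_def)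
  finally show ?thesis by (simp add: mult.assoc)
qed

lemma single_nz: "v \<noteq> 0 \<Longrightarrow> Poly_Mapping.single m v \<noteq> 0"
  by (metis lookup_single_eq lookup_zero)

definition mono :: "('i \<times> bool \<Rightarrow>\<^sub>0 nat) \<Rightarrow> 'i::linorder ratfun" where
  "mono m = Fract (Poly_Mapping.single m 1) 1"

lemma mono_mult: "mono a * mono b = mono (a + b)"
  by (simp add: mono_def mult_single)
lemma mono_0: "mono 0 = 1"
  by (simp add: mono_def One_fract_def)
lemma mono_nz: "mono m \<noteq> 0"
  by (simp add: mono_def Zero_fract_def eq_fract single_nz)
lemma var_mono: "var v = mono (Poly_Mapping.single v 1)"
  by (simp add: var_def mono_def)

definition goodm :: "'i \<Rightarrow> ('i \<times> bool \<Rightarrow>\<^sub>0 nat) \<Rightarrow> bool" where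
  "goodm k m \<longleftrightarrow> Poly_Mapping.lookup m (k, True) = 0"

definition goodS :: "'i \<Rightarrow> 'i::linorder ratfun set" where
  "goodS k = {mono m | m. goodm k m}"

lemma goodS_1: "1 \<in> goodS k"
  unfolding goodS_def goodm_def using mono_0 by force
lemma goodS_mult: "a \<in> goodS k \<Longrightarrow> b \<in> goodS k \<Longrightarrow> a * b \<in> goodS k"
  unfolding goodS_def goodm_def by (auto simp: mono_mult lookup_add)
lemma goodS_pow: "a \<in> goodS k \<Longrightarrow> a ^ n \<in> goodS k"
  by (induction n) (auto simp: goodS_1 goodS_mult)
lemma goodS_prod: "(\<And>j. j \<in> A \<Longrightarrow> f j \<in> goodS k) \<Longrightarrow> prod f A \<in> goodS k"
proof (induction A rule: infinite_finite_induct)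
  case (infinite A) then show ?case by (simp add: goodS_1)
next
  case empty then show ?case by (simp add: goodS_1)
next
  case (insert x F) then show ?case by (simp add: goodS_mult)
qed
lemma goodS_B: "Bvar j \<in> goodS k"
  unfolding goodS_def goodm_def Bvar_def var_mono by (auto simp: lookup_single)

lemma one_plus_X_nz: "1 + Xvar k \<noteq> (0 :: 'i::linorder ratfun)"
proof -
  have "1 + Xvar k = mono 0 + mono (Poly_Mapping.single (k, True) 1)"
    by (simp add: mono_0 Xvar_def var_mono)
  also have "\<dots> = Fract (Poly_Mapping.single 0 1 + Poly_Mapping.single (Poly_Mapping.single (k, True) 1) 1) 1"
    by (simp add: mono_def)
  finally have e: "1 + Xvar k = \<dots>" .
  have "Poly_Mapping.lookup (Poly_Mapping.single 0 1 + Poly_Mapping.single (Poly_Mapping.single (k, True) (1::nat)) (1::rat)) 0 = 1"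
    by (simp add: lookup_add lookup_single when_def single_nz)
  then have "Poly_Mapping.single 0 1 + Poly_Mapping.single (Poly_Mapping.single (k, True) (1::nat)) (1::rat) \<noteq> 0"
    by auto
  then show ?thesis unfolding e by (simp add: Zero_fract_def eq_fract)
qed

lemma sum_mono_nz: "a \<in> goodS k \<Longrightarrow> b \<in> goodS k \<Longrightarrow> a + Xvar k * b \<noteq> 0"
proof -
  assume "a \<in> goodS k" "b \<in> goodS k"
  then obtain m1 m2 where m: "a = mono m1" "b = mono m2" "goodm k m1" "goodm k m2"
    unfolding goodS_def by auto
  let ?m3 = "Poly_Mapping.single (k, True) 1 + m2"
  have "Xvar k * b = mono ?m3" by (simp add: m Xvar_def var_mono mono_mult)
  moreover have ne: "m1 \<noteq> ?m3"
    using m(3) unfolding goodm_def by (auto simp: lookup_add lookup_single)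
  ultimately have e: "a + Xvar k * b = Fract (Poly_Mapping.single m1 1 + Poly_Mapping.single ?m3 1) 1"
    by (simp add: m mono_def)
  have "Poly_Mapping.lookup (Poly_Mapping.single m1 1 + Poly_Mapping.single ?m3 (1::rat)) m1 = 1"
    using ne by (simp add: lookup_add lookup_single when_def)
  then have "Poly_Mapping.single m1 1 + Poly_Mapping.single ?m3 (1::rat) \<noteq> 0" by auto
  then show ?thesis unfolding e by (simp add: Zero_fract_def eq_fract)
qed

lemma powi_split: "(b::'k::field) \<noteq> 0 \<Longrightarrow>
  b powi e = (if e > 0 then b ^ nat e else 1) / (if e < 0 then b ^ nat (-e) else 1)"
  by (auto simp: power_int_def power_inverse field_simps)

lemma Bplus_univ: "Bplus \<epsilon> B k = (\<Prod>j\<in>UNIV. if \<epsilon> k j > 0 then B j ^ nat (\<epsilon> k j) else 1)"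
  unfolding Bplus_def by (simp add: prod.If_cases)
lemma Bminus_univ: "Bminus \<epsilon> B k = (\<Prod>j\<in>UNIV. if \<epsilon> k j < 0 then B j ^ nat (- \<epsilon> k j) else 1)"
  unfolding Bminus_def by (simp add: prod.If_cases)

lemma Bplus_nz: "(\<And>j. B j \<noteq> 0) \<Longrightarrow> Bplus \<epsilon> B k \<noteq> 0"
  unfolding Bplus_def by (simp add: prod_zero_iff)
lemma Bminus_nz: "(\<And>j. B j \<noteq> 0) \<Longrightarrow> Bminus \<epsilon> B k \<noteq> 0"
  unfolding Bminus_def by (simp add: prod_zero_iff)

lemma prod_powi_eps: "(\<And>j. (B j :: 'k::field) \<noteq> 0) \<Longrightarrow>
   (\<Prod>j\<in>UNIV. B j powi \<epsilon> k j) = Bplus \<epsilon> B k / Bminus \<epsilon> B k"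
proof -
  assume nz: "\<And>j. (B j :: 'k::field) \<noteq> 0"
  have "(\<Prod>j\<in>UNIV. B j powi \<epsilon> k j) = (\<Prod>j\<in>UNIV.
      (if \<epsilon> k j > 0 then B j ^ nat (\<epsilon> k j) else 1) / (if \<epsilon> k j < 0 then B j ^ nat (- \<epsilon> k j) else 1))"
    using nz by (intro prod.cong refl powi_split)
  also have "\<dots> = Bplus \<epsilon> B k / Bminus \<epsilon> B k"
    unfolding Bplus_univ Bminus_univ by (rule prod_dividef)
  finally show ?thesis .
qed

lemma Bminus_powi: "(\<And>j. (B j :: 'k::field) \<noteq> 0) \<Longrightarrow>
   (\<Prod>j\<in>UNIV. B j powi (if \<epsilon> k j < 0 then - \<epsilon> k j else 0)) = Bminus \<epsilon> B k"
  unfolding Bminus_univ by (intro prod.cong refl) (auto simp: power_int_def)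

lemma Xtilde_eq: "(\<And>j. (B j :: 'k::field) \<noteq> 0) \<Longrightarrow>
   Xtilde \<epsilon> B X k = X k * Bplus \<epsilon> B k / Bminus \<epsilon> B k"
  unfolding Xtilde_def by (simp add: prod_powi_eps)

definition gv :: "('i::{finite,linorder} \<Rightarrow> 'i \<Rightarrow> int) \<Rightarrow> 'i \<Rightarrow> 'i gen \<Rightarrow> 'i ratfun" where
  "gv \<epsilon> k g = (case g of Bg i \<Rightarrow> Bvar i | Xg i \<Rightarrow> Xvar i | Pg \<Rightarrow> 1 + Xvar k
      | Qg \<Rightarrow> 1 + Xtilde \<epsilon> Bvar Xvar k)"

lemma Bvar_nz: "Bvar j \<noteq> 0" by (simp add: Bvar_def var_mono mono_nz)
lemma Xvar_nz: "Xvar j \<noteq> 0" by (simp add: Xvar_def var_mono mono_nz)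

lemma goodS_nz: "a \<in> goodS k \<Longrightarrow> a \<noteq> 0"
  unfolding goodS_def using mono_nz by auto

lemma Bplus_good: "Bplus \<epsilon> Bvar k \<in> goodS k"
  unfolding Bplus_def by (intro goodS_prod goodS_pow goodS_B)
lemma Bminus_good: "Bminus \<epsilon> Bvar k \<in> goodS k"
  unfolding Bminus_def by (intro goodS_prod goodS_pow goodS_B)

lemma Q_eq: "1 + Xtilde \<epsilon> Bvar Xvar k =
   (Bminus \<epsilon> Bvar k + Xvar k * Bplus \<epsilon> Bvar k) / Bminus \<epsilon> Bvar k"
  using Bminus_nz[of Bvar \<epsilon> k] Bvar_nz by (simp add: Xtilde_eq Bvar_nz field_simps)

lemma Q_nz: "1 + Xtilde \<epsilon> Bvar Xvar k \<noteq> 0"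
proof -
  have a: "Bminus \<epsilon> Bvar k + Xvar k * Bplus \<epsilon> Bvar k \<noteq> 0"
    by (rule sum_mono_nz[OF Bminus_good Bplus_good])
  have b: "Bminus \<epsilon> Bvar k \<noteq> 0" by (rule Bminus_nz[OF Bvar_nz])
  show ?thesis unfolding Q_eq using a b by simp
qed

lemma gv_nz: "gv \<epsilon> k g \<noteq> 0"
  by (cases g) (auto simp: gv_def Bvar_nz Xvar_nz one_plus_X_nz Q_nz)

lemma mon_delta: "mon v (\<lambda>g::'g::finite. if g = g0 then 1 else 0) = (v g0 :: 'k::field)"
proof -
  have "mon v (\<lambda>g. if g = g0 then 1 else 0) = (\<Prod>g\<in>UNIV. if g = g0 then v g else 1)"
    unfolding mon_def by (intro prod.cong) auto
  then show ?thesis by simp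
qed

lemma mon_delta_neg: "mon v (\<lambda>g::'g::finite. if g = g0 then -1 else 0) = inverse (v g0 :: 'k::field)"
proof -
  have "mon v (\<lambda>g. if g = g0 then -1 else 0) = (\<Prod>g\<in>UNIV. if g = g0 then inverse (v g) else 1)"
    unfolding mon_def by (intro prod.cong) (auto simp: power_int_minus)
  then show ?thesis by simp
qed

lemma mon_gen: "mon v (u :: 'i::finite gen \<Rightarrow> int) =
   (\<Prod>i\<in>UNIV. v (Bg i) powi u (Bg i)) * (\<Prod>i\<in>UNIV. v (Xg i) powi u (Xg i)) *
   v Pg powi u Pg * v Qg powi u Qg"
  unfolding mon_def by (rule prod_gen)

definition ukv :: "('i \<Rightarrow> 'i \<Rightarrow> int) \<Rightarrow> 'i \<Rightarrow> 'i gen \<Rightarrow> int" where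
  "ukv \<epsilon> k g = (case g of Bg j \<Rightarrow> (if \<epsilon> k j < 0 then - \<epsilon> k j else 0) - (if j = k then 1 else 0)
      | Xg j \<Rightarrow> 0 | Pg \<Rightarrow> -1 | Qg \<Rightarrow> 1)"
definition uvec :: "('i \<Rightarrow> 'i \<Rightarrow> int) \<Rightarrow> 'i \<Rightarrow> 'i \<Rightarrow> 'i gen \<Rightarrow> int" where
  "uvec \<epsilon> k i g = (if i = k then ukv \<epsilon> k g else (if g = Bg i then 1 else 0))"
definition yiv :: "('i \<Rightarrow> 'i \<Rightarrow> int) \<Rightarrow> 'i \<Rightarrow> 'i \<Rightarrow> 'i gen \<Rightarrow> int" where
  "yiv \<epsilon> k i g = (case g of Bg j \<Rightarrow> 0
      | Xg j \<Rightarrow> (if j = i then 1 else 0) + (if j = k then max (\<epsilon> i k) 0 else 0)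
      | Pg \<Rightarrow> - \<epsilon> i k | Qg \<Rightarrow> 0)"
definition yvec :: "('i \<Rightarrow> 'i \<Rightarrow> int) \<Rightarrow> 'i \<Rightarrow> 'i \<Rightarrow> 'i gen \<Rightarrow> int" where
  "yvec \<epsilon> k i g = (if i = k then (if g = Xg k then -1 else 0) else yiv \<epsilon> k i g)"
definition xtv :: "('i \<Rightarrow> 'i \<Rightarrow> int) \<Rightarrow> 'i \<Rightarrow> 'i gen \<Rightarrow> int" where
  "xtv \<epsilon> k g = (case g of Bg j \<Rightarrow> \<epsilon> k j | Xg j \<Rightarrow> (if j = k then 1 else 0) | Pg \<Rightarrow> 0 | Qg \<Rightarrow> 0)"

lemma prod_powi_delta: "(\<Prod>j\<in>(UNIV::'a::finite set). (f j :: 'k::field) powi (if j = i then c else 0)) = f i powi c"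
proof -
  have "(\<Prod>j\<in>(UNIV::'a set). f j powi (if j = i then c else 0)) = (\<Prod>j\<in>UNIV. if j = i then f j powi c else 1)"
    by (intro prod.cong) auto
  then show ?thesis by simp
qed

lemma aux_field: "(a::'k::field) \<noteq> 0 \<Longrightarrow> b \<noteq> 0 \<Longrightarrow> c \<noteq> 0 \<Longrightarrow> a / b * inverse c * (n / a) = n / (b * c)"
  by (simp add: field_simps)

lemma mon_uk: "mon (gv \<epsilon> k) (ukv \<epsilon> k) = mu_B \<epsilon> k Bvar Xvar k"
proof -
  have "(\<Prod>j\<in>UNIV. Bvar j powi ((if \<epsilon> k j < 0 then - \<epsilon> k j else 0) - (if j = k then 1 else 0)))
     = (\<Prod>j\<in>UNIV. Bvar j powi (if \<epsilon> k j < 0 then - \<epsilon> k j else 0) / Bvar j powi (if j = k then 1 else 0))"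
    by (intro prod.cong refl power_int_diff) (simp add: Bvar_nz)
  also have "\<dots> = Bminus \<epsilon> Bvar k / Bvar k"
    by (simp add: prod_dividef Bminus_powi Bvar_nz prod_powi_delta[where c=1, simplified])
  finally have 1: "(\<Prod>j\<in>UNIV. Bvar j powi ((if \<epsilon> k j < 0 then - \<epsilon> k j else 0) - (if j = k then 1 else 0)))
     = Bminus \<epsilon> Bvar k / Bvar k" .
  have "mon (gv \<epsilon> k) (ukv \<epsilon> k) = Bminus \<epsilon> Bvar k / Bvar k * inverse (1 + Xvar k) * (1 + Xtilde \<epsilon> Bvar Xvar k)"
    unfolding mon_gen by (simp add: ukv_def gv_def 1 power_int_minus)
  also have "\<dots> = mu_B \<epsilon> k Bvar Xvar k"
    using Bminus_nz[of Bvar \<epsilon> k, OF Bvar_nz] Bvar_nz[of k] one_plus_X_nz[of k]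
    unfolding Q_eq mu_B_def by (simp only: simp_thms if_True) (rule aux_field; simp)
  finally show ?thesis .
qed

lemma mon_uvec: "mon (gv \<epsilon> k) (uvec \<epsilon> k i) = mu_B \<epsilon> k Bvar Xvar i"
proof (cases "i = k")
  case True
  then have "uvec \<epsilon> k i = ukv \<epsilon> k" by (simp add: fun_eq_iff uvec_def)
  then show ?thesis using True by (simp add: mon_uk)
next
  case False
  then have "uvec \<epsilon> k i = (\<lambda>g. if g = Bg i then 1 else 0)" by (simp add: uvec_def fun_eq_iff)
  then show ?thesis using False by (simp add: mon_delta mu_B_def gv_def)
qed

lemma mon_yvec: "mon (gv \<epsilon> k) (yvec \<epsilon> k i) = mu_X \<epsilon> k Xvar i"
proof (cases "i = k")
  case True
  then have "yvec \<epsilon> k i = (\<lambda>g. if g = Xg k then -1 else 0)" by (simp add: yvec_def fun_eq_iff)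
  then show ?thesis using True by (simp add: mon_delta_neg mu_X_def gv_def)
next
  case False
  let ?m = "max (\<epsilon> i k) 0"
  have "(\<Prod>j\<in>UNIV. Xvar j powi ((if j = i then 1 else 0) + (if j = k then ?m else 0)))
     = (\<Prod>j\<in>UNIV. Xvar j powi (if j = i then 1 else 0) * Xvar j powi (if j = k then ?m else 0))"
    by (intro prod.cong refl power_int_add) (simp add: Xvar_nz)
  also have "\<dots> = Xvar i * Xvar k powi ?m"
    by (simp add: prod.distrib prod_powi_delta prod_powi_delta[where c=1, simplified])
  finally have 1: "(\<Prod>j\<in>UNIV. Xvar j powi ((if j = i then 1 else 0) + (if j = k then ?m else 0)))
     = Xvar i * Xvar k powi ?m" .
  have "mon (gv \<epsilon> k) (yvec \<epsilon> k i) = Xvar i * Xvar k powi ?m * (1 + Xvar k) powi (- \<epsilon> i k)"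
    unfolding mon_gen using False by (simp add: yvec_def yiv_def gv_def 1)
  also have "\<dots> = mu_X \<epsilon> k Xvar i"
  proof -
    have nz: "Xvar k \<noteq> 0" "1 + Xvar k \<noteq> 0" using Xvar_nz one_plus_X_nz by auto
    consider "\<epsilon> i k > 0" | "\<epsilon> i k < 0" | "\<epsilon> i k = 0" by linarith
    then show ?thesis
    proof cases
      case 1
      have "1 + Xvar k powi (- sgn (\<epsilon> i k)) = (1 + Xvar k) / Xvar k"
        using 1 nz by (simp add: power_int_minus field_simps)
      then show ?thesis using 1 False nz
        by (simp add: mu_X_def power_int_divide_distrib power_int_minus field_simps)
    next
      case 2 then show ?thesis using False by (simp add: mu_X_def)
    next
      case 3 then show ?thesis using False by (simp add: mu_X_def)
    qed
  qed
  finally show ?thesis .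
qed

lemma mon_xtv: "mon (gv \<epsilon> k) (xtv \<epsilon> k) = Xtilde \<epsilon> Bvar Xvar k"
  unfolding mon_gen by (simp add: xtv_def gv_def Xtilde_def prod_powi_delta[where c=1, simplified] mult.commute)

lemma mon_P: "mon (gv \<epsilon> k) (\<lambda>g. if g = Pg then 1 else 0) = 1 + Xvar k"
  by (simp add: mon_delta gv_def)
lemma mon_Q: "mon (gv \<epsilon> k) (\<lambda>g. if g = Qg then 1 else 0) = 1 + Xtilde \<epsilon> Bvar Xvar k"
  by (simp add: mon_delta gv_def)
lemma mon_B: "mon (gv \<epsilon> k) (\<lambda>g. if g = Bg i then 1 else 0) = Bvar i"
  by (simp add: mon_delta gv_def)
lemma mon_X: "mon (gv \<epsilon> k) (\<lambda>g. if g = Xg i then 1 else 0) = Xvar i"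
  by (simp add: mon_delta gv_def)

lemma Wpush: "(\<And>g. v g \<noteq> 0) \<Longrightarrow>
  wedge_eq (W c d (\<lambda>i. mon v (U i)) (\<lambda>i. mon v (Y i)))
    (push (v :: 'g::finite \<Rightarrow> 'k::field) (\<lambda>g h. - (\<Sum>(i,j)\<in>{(i,j). i < j}. d i * c i j * (U i g * U j h))
        - (\<Sum>i\<in>UNIV. d i * (U i g * Y i h))))"
proof -
  assume nz: "\<And>g. v g \<noteq> 0"
  let ?A = "{(i,j). (i::'i::{finite,linorder}) < j}"
  have S1: "push v (\<lambda>g h. \<Sum>(i,j)\<in>?A. d i * c i j * (U i g * U j h)) =
      (\<Sum>(i,j)\<in>?A. zmult (d i * c i j) (push v (\<lambda>g h. U i g * U j h)))"
  proof -
    have "push v (\<lambda>g h. \<Sum>p\<in>?A. (\<lambda>(i,j). d i * c i j * (U i g * U j h)) p) =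
       (\<Sum>p\<in>?A. push v (\<lambda>g h. (\<lambda>(i,j). d i * c i j * (U i g * U j h)) p))"
      by (rule push_sum)
    also have "\<dots> = (\<Sum>(i,j)\<in>?A. zmult (d i * c i j) (push v (\<lambda>g h. U i g * U j h)))"
      by (intro sum.cong refl) (clarsimp simp: push_scale)
    finally show ?thesis by simp
  qed
  have S2: "push v (\<lambda>g h. \<Sum>i\<in>UNIV. d i * (U i g * Y i h)) =
      (\<Sum>i\<in>UNIV. zmult (d i) (push v (\<lambda>g h. U i g * Y i h)))"
    by (simp add: push_sum push_scale)
  have R: "push v (\<lambda>g h. - (\<Sum>(i,j)\<in>?A. d i * c i j * (U i g * U j h))
        - (\<Sum>i\<in>UNIV. d i * (U i g * Y i h))) =
     - (\<Sum>(i,j)\<in>?A. zmult (d i * c i j) (push v (\<lambda>g h. U i g * U j h)))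
     - (\<Sum>i\<in>UNIV. zmult (d i) (push v (\<lambda>g h. U i g * Y i h)))"
    using push_diff[of v "\<lambda>g h. - (\<Sum>(i,j)\<in>?A. d i * c i j * (U i g * U j h))"
        "\<lambda>g h. \<Sum>i\<in>UNIV. d i * (U i g * Y i h)"]
      push_neg[of v "\<lambda>g h. \<Sum>(i,j)\<in>?A. d i * c i j * (U i g * U j h)"] S1 S2
    by simp
  have "wedge_eq (W c d (\<lambda>i. mon v (U i)) (\<lambda>i. mon v (Y i)))
     (- (\<Sum>(i,j)\<in>?A. zmult (d i * c i j) (push v (\<lambda>g h. U i g * U j h)))
     - (\<Sum>i\<in>UNIV. zmult (d i) (push v (\<lambda>g h. U i g * Y i h))))"
    unfolding W_def
    by (intro weq_diff weq_neg weq_sum) (auto intro!: weq_zmult w_mon_mon nz)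
  then show ?thesis unfolding R .
qed

lemma pair_skew:
  fixes c :: "'i::{finite,linorder} \<Rightarrow> 'i \<Rightarrow> int"
  assumes sk: "\<And>i j. c i j = - c j i"
  shows "(\<Sum>(i,j)\<in>{(i,j). i < j}. c i j * (x i * y j)) - (\<Sum>(i,j)\<in>{(i,j). i < j}. c i j * (y i * x j))
     = (\<Sum>i\<in>UNIV. \<Sum>j\<in>UNIV. c i j * (x i * y j))"
proof -
  have conv: "(\<Sum>(i,j)\<in>{(i,j). i < j}. F i j) = (\<Sum>i\<in>UNIV. \<Sum>j\<in>UNIV. if i < j then F i j else 0)"
    for F :: "'i \<Rightarrow> 'i \<Rightarrow> int"
  proof -
    have "(\<Sum>(i,j)\<in>{(i,j). i < j}. F i j) = (\<Sum>p\<in>UNIV. if fst p < snd p then F (fst p) (snd p) else 0)"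
    proof -
      have "{(i,j). i < j} = {x::'i\<times>'i. fst x < snd x}" by auto
      then show ?thesis by (simp add: sum.If_cases case_prod_beta Int_def)
    qed
    also have "\<dots> = (\<Sum>i\<in>UNIV. \<Sum>j\<in>UNIV. if i < j then F i j else 0)"
      using sum.cartesian_product[of "\<lambda>i j. if i < j then F i j else 0" UNIV UNIV] by (simp add: case_prod_beta)
    finally show ?thesis .
  qed
  have sw: "(\<Sum>i\<in>UNIV. \<Sum>j\<in>UNIV. if i < j then c i j * (y i * x j) else 0)
      = (\<Sum>i\<in>UNIV. \<Sum>j\<in>UNIV. if j < i then - (c i j * (x i * y j)) else 0)"
  proof -
    have pt: "c j i * (y j * x i) = - (c i j * (x i * y j))" for i j
      using sk[of j i] by (simp add: mult_ac)
    show ?thesis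
      apply (subst sum.swap)
      apply (rule sum.cong[OF refl])
      apply (rule sum.cong[OF refl])
      apply (simp only: pt)
      done
  qed
  have diag: "c i i = 0" for i using sk[of i i] by simp
  have "(\<Sum>i\<in>UNIV. \<Sum>j\<in>UNIV. if i < j then c i j * (x i * y j) else 0)
      - (\<Sum>i\<in>UNIV. \<Sum>j\<in>UNIV. if j < i then - (c i j * (x i * y j)) else 0)
      = (\<Sum>i\<in>UNIV. \<Sum>j\<in>UNIV. c i j * (x i * y j))"
    unfolding sum_subtractf[symmetric]
    by (intro sum.cong refl) (auto simp: diag neq_iff)
  then show ?thesis unfolding conv sw .
qed

lemma sum_split_k: "(\<Sum>i\<in>(UNIV::'i::finite set). f i) = f k + (\<Sum>i\<in>UNIV - {k}. f i)"
  by (simp add: sum.remove)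

lemma sumU: "(\<Sum>i\<in>(UNIV::'i::finite set). (f i :: int) * uvec \<epsilon> k i g) =
   f k * ukv \<epsilon> k g + (case g of Bg a \<Rightarrow> (if a = k then 0 else f a) | _ \<Rightarrow> 0)"
proof -
  have "(\<Sum>i\<in>UNIV - {k}. f i * uvec \<epsilon> k i g) = (\<Sum>i\<in>UNIV - {k}. if g = Bg i then f i else 0)"
    by (intro sum.cong refl) (auto simp: uvec_def)
  also have "\<dots> = (case g of Bg a \<Rightarrow> (if a = k then 0 else f a) | _ \<Rightarrow> 0)"
    by (cases g) (auto simp: sum.delta sum.delta')
  finally show ?thesis by (subst sum_split_k[of _ k]) (simp add: uvec_def)
qed

lemma mult_delta: "(x::int) * (if P then 1 else 0) = (if P then x else 0)" by simp

lemma sumB: "(\<Sum>i\<in>(UNIV::'i::finite set). (f i :: int) * (if g = Bg i then 1 else 0)) = (case g of Bg a \<Rightarrow> f a | _ \<Rightarrow> 0)"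
  by (cases g) (auto simp: mult_delta)

context
  fixes \<epsilon> :: "'i::{finite,linorder} \<Rightarrow> 'i \<Rightarrow> int" and d :: "'i \<Rightarrow> int" and k :: 'i
  assumes sk: "\<And>i j. d i * \<epsilon> i j = - (d j * \<epsilon> j i)" and dpos: "\<And>i. d i > 0"
begin

lemma e_diag: "\<epsilon> x x = 0"
  using sk[of x x] dpos[of x] by simp

lemma sgn_pos: "\<epsilon> x y > 0 \<longleftrightarrow> \<epsilon> y x < 0"
proof -
  have 1: "\<epsilon> x y > 0 \<longleftrightarrow> d x * \<epsilon> x y > 0" using dpos[of x] by (simp add: zero_less_mult_iff)
  have 2: "\<epsilon> y x < 0 \<longleftrightarrow> d y * \<epsilon> y x < 0" using dpos[of y] by (simp add: mult_less_0_iff)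
  show ?thesis unfolding 1 2 sk[of x y] by simp
qed

lemma sgn_neg: "\<epsilon> x y < 0 \<longleftrightarrow> \<epsilon> y x > 0"
  using sgn_pos[of y x] by simp

lemma sgn_zero: "\<epsilon> x y = 0 \<longleftrightarrow> \<epsilon> y x = 0"
  using sgn_pos[of x y] sgn_neg[of x y] by linarith

lemma abs_rel: "d x * \<bar>\<epsilon> x y\<bar> = d y * \<bar>\<epsilon> y x\<bar>"
proof -
  have "\<bar>d x * \<epsilon> x y\<bar> = \<bar>d y * \<epsilon> y x\<bar>" using sk[of x y] by simp
  then show ?thesis using dpos[of x] dpos[of y] by (simp add: abs_mult)
qed

lemma cmN: "d i * mutate \<epsilon> k i j =
  (if i = k then - (d k * \<epsilon> k j) else if j = k then d k * \<epsilon> k i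
   else d i * \<epsilon> i j + d k * (max (- \<epsilon> k i) 0 * \<epsilon> k j - max (- \<epsilon> k j) 0 * \<epsilon> k i))"
proof (cases "i = k")
  case True then show ?thesis by (simp add: mutate_def)
next
  case ik: False
  show ?thesis
  proof (cases "j = k")
    case True then show ?thesis using ik sk[of i k] by (simp add: mutate_def)
  next
    case jk: False
    have a: "d i * \<bar>\<epsilon> i k\<bar> = d k * \<bar>\<epsilon> k i\<bar>" by (rule abs_rel)
    show ?thesis
    proof (cases "\<epsilon> i k * \<epsilon> k j \<le> 0")
      case True
      then have "\<epsilon> k i * \<epsilon> k j \<ge> 0"
        using sgn_pos[of i k] sgn_neg[of i k] sgn_zero[of i k]
        by (auto simp: mult_le_0_iff zero_le_mult_iff)
      then have "max (- \<epsilon> k i) 0 * \<epsilon> k j - max (- \<epsilon> k j) 0 * \<epsilon> k i = 0"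
        by (auto simp: max_def zero_le_mult_iff)
      then show ?thesis using ik jk True by (simp add: mutate_def)
    next
      case False
      then have s: "(\<epsilon> k i < 0 \<and> \<epsilon> k j > 0) \<or> (\<epsilon> k i > 0 \<and> \<epsilon> k j < 0)"
        using sgn_pos[of i k] sgn_neg[of i k] sgn_zero[of i k]
        by (auto simp: mult_le_0_iff)
      have "d i * mutate \<epsilon> k i j = d i * \<epsilon> i j + (d i * \<bar>\<epsilon> i k\<bar>) * \<epsilon> k j"
        using ik jk False by (simp add: mutate_def algebra_simps)
      also have "\<dots> = d i * \<epsilon> i j + d k * (\<bar>\<epsilon> k i\<bar> * \<epsilon> k j)" by (simp add: a)
      also have "\<dots> = d i * \<epsilon> i j + d k * (max (- \<epsilon> k i) 0 * \<epsilon> k j - max (- \<epsilon> k j) 0 * \<epsilon> k i)"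
        using s by (auto simp: max_def abs_if algebra_simps)
      finally show ?thesis using ik jk by simp
    qed
  qed
qed


lemma dyN: "d i * yvec \<epsilon> k i h =
  (if i = k then (if h = Xg k then - d k else 0) else
   (case h of Bg _ \<Rightarrow> 0 | Xg j \<Rightarrow> (if j = i then d i else 0) + (if j = k then d k * max (- \<epsilon> k i) 0 else 0)
    | Pg \<Rightarrow> d k * \<epsilon> k i | Qg \<Rightarrow> 0))"
proof -
  have m: "d i * max (\<epsilon> i k) 0 = d k * max (- \<epsilon> k i) 0"
  proof -
    have "d i * max (\<epsilon> i k) 0 = max (d i * \<epsilon> i k) 0" using dpos[of i]
      by (simp add: max_def mult_le_0_iff)
    also have "\<dots> = max (- (d k * \<epsilon> k i)) 0" by (simp add: sk[of i k])
    also have "\<dots> = d k * max (- \<epsilon> k i) 0" using dpos[of k]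
      by (auto simp: max_def mult_le_0_iff zero_le_mult_iff)
    finally show ?thesis .
  qed
  have p: "d i * (- \<epsilon> i k) = d k * \<epsilon> k i" using sk[of i k] by simp
  show ?thesis
  proof (cases "i = k")
    case True then show ?thesis by (simp add: yvec_def)
  next
    case False
    then show ?thesis
    proof (cases h)
      case (Xg j)
      then show ?thesis using False
        by (simp add: yvec_def yiv_def distrib_left m)
    qed (use False p in \<open>simp_all add: yvec_def yiv_def\<close>)
  qed
qed

lemma skk: "i \<noteq> k \<Longrightarrow> d i * \<epsilon> i k = - (d k * \<epsilon> k i)" by (rule sk)


lemma key:
  shows "- (\<Sum>i\<in>UNIV. \<Sum>j\<in>UNIV. (d i * mutate \<epsilon> k i j) * (uvec \<epsilon> k i g * uvec \<epsilon> k j h))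
     - ((\<Sum>i\<in>UNIV. d i * (uvec \<epsilon> k i g * yvec \<epsilon> k i h)) - (\<Sum>i\<in>UNIV. d i * (uvec \<epsilon> k i h * yvec \<epsilon> k i g)))
     + (\<Sum>i\<in>UNIV. \<Sum>j\<in>UNIV. (d i * \<epsilon> i j) * ((if g = Bg i then 1 else 0) * (if h = Bg j then 1 else 0)))
     + ((\<Sum>i\<in>UNIV. d i * ((if g = Bg i then 1 else 0) * (if h = Xg i then 1 else 0)))
        - (\<Sum>i\<in>UNIV. d i * ((if h = Bg i then 1 else 0) * (if g = Xg i then 1 else 0))))
     - (d k * ((if g = Qg then 1 else 0) * xtv \<epsilon> k h - (if g = Pg then 1 else 0) * (if h = Xg k then 1 else 0))
        - d k * ((if h = Qg then 1 else 0) * xtv \<epsilon> k g - (if h = Pg then 1 else 0) * (if g = Xg k then 1 else 0))) = 0"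
proof -
  let ?U = "uvec \<epsilon> k" and ?Y = "yvec \<epsilon> k"
  have r1: "(\<Sum>i\<in>UNIV. \<Sum>j\<in>UNIV. c i j * (?U i g * ?U j h)) = (\<Sum>i\<in>UNIV. (\<Sum>j\<in>UNIV. c i j * ?U j h) * ?U i g)"
    for c :: "'i \<Rightarrow> 'i \<Rightarrow> int"
    by (simp add: sum_distrib_left sum_distrib_right mult_ac)
  have r2: "(\<Sum>i\<in>UNIV. d i * (?U i g' * ?Y i h')) = (\<Sum>i\<in>UNIV. (d i * ?Y i h') * ?U i g')" for g' h'
    by (simp add: mult_ac)
  have r3: "(\<Sum>i\<in>UNIV. \<Sum>j\<in>UNIV. (d i * \<epsilon> i j) * ((if g = Bg i then 1 else 0) * (if h = Bg j then 1 else 0)))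
     = (\<Sum>i\<in>UNIV. (\<Sum>j\<in>UNIV. (d i * \<epsilon> i j) * (if h = Bg j then 1 else 0)) * (if g = Bg i then 1 else 0))"
    by (simp add: sum_distrib_left sum_distrib_right mult_ac)
  have r4: "(\<Sum>i\<in>UNIV. d i * ((if g' = Bg i then 1 else 0) * (if h' = Xg i then 1 else 0)))
     = (\<Sum>i\<in>UNIV. (d i * (if h' = Xg i then 1 else 0)) * (if g' = Bg i then 1 else 0))" for g' h'
    by (simp add: mult_ac)
  show ?thesis
    unfolding r1 r2 r3 r4 sumU sumB
    apply (cases g; cases h)
    apply (simp_all add: ukv_def xtv_def cmN dyN skk e_diag)
    done
qed



lemma cm_skew: "d i * mutate \<epsilon> k i j = - (d j * mutate \<epsilon> k j i)"
proof -
  have "d i * \<epsilon> i j = - (d j * \<epsilon> j i)" by (rule sk)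
  then show ?thesis by (simp add: cmN[of i j] cmN[of j i] e_diag algebra_simps)
qed

lemma main_ctx: "wedge_eq
           (W (mutate \<epsilon> k) d (mu_B \<epsilon> k Bvar Xvar) (mu_X \<epsilon> k Xvar) - W \<epsilon> d Bvar Xvar)
           (zmult (d k) (wedge (1 + Xtilde \<epsilon> Bvar Xvar k) (Xtilde \<epsilon> Bvar Xvar k)
                         - wedge (1 + Xvar k) (Xvar k)))"
proof -
  let ?v = "gv \<epsilon> k"
  let ?U = "uvec \<epsilon> k" and ?Y = "yvec \<epsilon> k"
  let ?eB = "\<lambda>i g. if g = Bg i then (1::int) else 0" and ?eX = "\<lambda>i g. if g = Xg i then (1::int) else 0"
  let ?eP = "\<lambda>g. if g = Pg then (1::int) else 0" and ?eQ = "\<lambda>g. if g = Qg then (1::int) else 0"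
  let ?A = "{(i,j). (i::'i) < j}"
  have nz: "\<And>g. ?v g \<noteq> 0" by (rule gv_nz)
  have eqB: "mu_B \<epsilon> k Bvar Xvar = (\<lambda>i. mon ?v (?U i))" by (simp add: fun_eq_iff mon_uvec)
  have eqX: "mu_X \<epsilon> k Xvar = (\<lambda>i. mon ?v (?Y i))" by (simp add: fun_eq_iff mon_yvec)
  have eqB0: "Bvar = (\<lambda>i. mon ?v (?eB i))" by (simp add: fun_eq_iff mon_B)
  have eqX0: "Xvar = (\<lambda>i. mon ?v (?eX i))" by (simp add: fun_eq_iff mon_X)
  define F1 where "F1 = (\<lambda>(g::'i gen) (h::'i gen). - (\<Sum>(i,j)\<in>?A. d i * mutate \<epsilon> k i j * (?U i g * ?U j h))
        - (\<Sum>i\<in>UNIV. d i * (?U i g * ?Y i h)))"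
  define F0 where "F0 = (\<lambda>(g::'i gen) (h::'i gen). - (\<Sum>(i,j)\<in>?A. d i * \<epsilon> i j * (?eB i g * ?eB j h))
        - (\<Sum>i\<in>UNIV. d i * (?eB i g * ?eX i h)))"
  define FT where "FT = (\<lambda>(g::'i gen) (h::'i gen). d k * (?eQ g * xtv \<epsilon> k h - ?eP g * ?eX k h))"
  have w1: "wedge_eq (W (mutate \<epsilon> k) d (mu_B \<epsilon> k Bvar Xvar) (mu_X \<epsilon> k Xvar)) (push ?v F1)"
    unfolding eqB eqX F1_def by (rule Wpush[OF nz])
  have w0: "wedge_eq (W \<epsilon> d Bvar Xvar) (push ?v F0)"
    unfolding F0_def by (subst eqB0, subst eqX0, rule Wpush[OF nz])
  have wT: "wedge_eq (zmult (d k) (wedge (1 + Xtilde \<epsilon> Bvar Xvar k) (Xtilde \<epsilon> Bvar Xvar k)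
                         - wedge (1 + Xvar k) (Xvar k))) (push ?v FT)"
  proof -
    have "wedge_eq (zmult (d k) (wedge (mon ?v ?eQ) (mon ?v (xtv \<epsilon> k)) - wedge (mon ?v ?eP) (mon ?v (?eX k))))
       (zmult (d k) (push ?v (\<lambda>g h. ?eQ g * xtv \<epsilon> k h) - push ?v (\<lambda>g h. ?eP g * ?eX k h)))"
      by (intro weq_zmult weq_diff w_mon_mon nz)
    also have "zmult (d k) (push ?v (\<lambda>g h. ?eQ g * xtv \<epsilon> k h) - push ?v (\<lambda>g h. ?eP g * ?eX k h)) = push ?v FT"
      unfolding FT_def push_scale push_diff ..
    finally show ?thesis by (simp only: mon_Q mon_xtv mon_P mon_X)
  qed
  have sym: "(F1 g h - F0 g h - FT g h) = (F1 h g - F0 h g - FT h g)" for g h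
  proof -
    have p1: "(\<Sum>(i,j)\<in>?A. d i * mutate \<epsilon> k i j * (?U i g * ?U j h)) - (\<Sum>(i,j)\<in>?A. d i * mutate \<epsilon> k i j * (?U i h * ?U j g))
       = (\<Sum>i\<in>UNIV. \<Sum>j\<in>UNIV. (d i * mutate \<epsilon> k i j) * (?U i g * ?U j h))"
      using pair_skew[of "\<lambda>i j. d i * mutate \<epsilon> k i j" "\<lambda>i. ?U i g" "\<lambda>i. ?U i h", OF cm_skew] by simp
    have p0: "(\<Sum>(i,j)\<in>?A. d i * \<epsilon> i j * (?eB i g * ?eB j h)) - (\<Sum>(i,j)\<in>?A. d i * \<epsilon> i j * (?eB i h * ?eB j g))
       = (\<Sum>i\<in>UNIV. \<Sum>j\<in>UNIV. (d i * \<epsilon> i j) * (?eB i g * ?eB j h))"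
      using pair_skew[of "\<lambda>i j. d i * \<epsilon> i j" "\<lambda>i. ?eB i g" "\<lambda>i. ?eB i h", OF sk] by simp
    have kk: "- (\<Sum>i\<in>UNIV. \<Sum>j\<in>UNIV. (d i * mutate \<epsilon> k i j) * (?U i g * ?U j h))
     - ((\<Sum>i\<in>UNIV. d i * (?U i g * ?Y i h)) - (\<Sum>i\<in>UNIV. d i * (?U i h * ?Y i g)))
     + (\<Sum>i\<in>UNIV. \<Sum>j\<in>UNIV. (d i * \<epsilon> i j) * (?eB i g * ?eB j h))
     + ((\<Sum>i\<in>UNIV. d i * (?eB i g * ?eX i h))
        - (\<Sum>i\<in>UNIV. d i * (?eB i h * ?eX i g)))
     - (d k * (?eQ g * xtv \<epsilon> k h - ?eP g * ?eX k h)
        - d k * (?eQ h * xtv \<epsilon> k g - ?eP h * ?eX k g)) = 0"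
      by (rule key)
    show ?thesis unfolding F1_def F0_def FT_def using p1 p0 kk by linarith
  qed
  have "wedge_eq (push ?v F1 - push ?v F0) (push ?v FT)"
  proof -
    have "push ?v F1 - push ?v F0 - push ?v FT = push ?v (\<lambda>g h. F1 g h - F0 g h - FT g h)"
      by (simp add: push_diff)
    moreover have "push ?v (\<lambda>g h. F1 g h - F0 g h - FT g h) \<in> RR"
      by (rule push_sym) (use sym nz in auto)
    ultimately show ?thesis unfolding wedge_eq_def by simp
  qed
  then have "wedge_eq (W (mutate \<epsilon> k) d (mu_B \<epsilon> k Bvar Xvar) (mu_X \<epsilon> k Xvar) - W \<epsilon> d Bvar Xvar) (push ?v FT)"
    using weq_diff[OF w1 w0] weq_trans by blast
  then show ?thesis using weq_sym[OF wT] weq_trans by blast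
qed

end

theorem proposition2p14:
  fixes \<epsilon> :: "'i::{finite,linorder} \<Rightarrow> 'i \<Rightarrow> int" and d :: "'i \<Rightarrow> int" and k :: 'i
  assumes "is_feed \<epsilon> d"
  defines "B \<equiv> (Bvar :: 'i \<Rightarrow> 'i ratfun)" and "X \<equiv> (Xvar :: 'i \<Rightarrow> 'i ratfun)"
  shows "wedge_eq
           (W (mutate \<epsilon> k) d (mu_B \<epsilon> k B X) (mu_X \<epsilon> k X) - W \<epsilon> d B X)
           (zmult (d k) (wedge (1 + Xtilde \<epsilon> B X k) (Xtilde \<epsilon> B X k)
                         - wedge (1 + X k) (X k)))"
proof -
  have dpos: "\<And>i. d i > 0" using assms(1) unfolding is_feed_def by blast
  have sk: "d i * \<epsilon> i j = - (d j * \<epsilon> j i)" for i j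
  proof -
    have "of_int (\<epsilon> i j) / of_int (d j) = - (of_int (\<epsilon> j i) / of_int (d i) :: rat)"
      using assms(1) unfolding is_feed_def by blast
    then have "of_int (d i * \<epsilon> i j) = (of_int (- (d j * \<epsilon> j i)) :: rat)"
      using dpos[of i] dpos[of j] by (simp add: field_simps)
    then show ?thesis by (simp only: of_int_eq_iff)
  qed
  show ?thesis unfolding B_def X_def by (rule main_ctx[OF sk dpos])
qed

end
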